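(* Let $X$ be a compact topological space, let $D\subseteq X$, let $\overline{D}$ be the closure of $D$ in $X$, and put $\partial D:=\overline{D}\setminus D$. Let $\overline{\mathbb{C}}=\mathbb{C}\cup\{\infty\}$ be the Riemann sphere and let $f\colon\overline{D}\to\overline{\mathbb{C}}$ be a continuous map such that $f(D)$ is open in $\overline{\mathbb{C}}$. Suppose that $f(\overline{D})\subseteq\mathbb{C}$ and that $f(\partial D)=J$, where $J\subseteq\mathbb{C}$ is the image of a Jordan curve (a simple closed curve). Then $f(D)=\mathcal{I}(J)$, where $\mathcal{I}(J)$ is the bounded connected component of $\mathbb{C}\setminus J$.
   Context: Note that $\partial D$ is defined as $\overline{D}\setminus D$. *)

theory Defs
  imports "HOL-Analysis.Analysis"
begin

end

theory Submission
  imports Defs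
begin

theorem mainTheorem5:
  fixes D :: "'a::topological_space set"
    and f :: "'a \<Rightarrow> complex"
    and g :: "real \<Rightarrow> complex"
  assumes X_compact: "compact (UNIV :: 'a set)"
    and f_cont: "continuous_on (closure D) f"
    and f_open: "open (f ` D)"
    and jordan: "simple_path g" "pathfinish g = pathstart g"
    and boundary: "f ` (closure D - D) = path_image g"
  shows "f ` D = inside (path_image g)"
proof -
  define U where "U = f ` D"
  define J where "J = path_image g"
  define I where "I = inside J"
  define Ou where "Ou = outside J"
  have JC: "I \<noteq> {}" "connected I" "connected Ou" "bounded I" "\<not> bounded Ou"
    "I \<inter> Ou = {}" "I \<union> Ou = - J" "frontier Ou = J"
    using Jordan_inside_outside[OF jordan] unfolding I_def Ou_def J_def by auto
  have cK: "compact (closure D)"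
    using compact_Int_closed[OF X_compact, of "closure D"] by simp
  hence K: "compact (f ` closure D)" using compact_continuous_image f_cont by blast
  have KU: "f ` closure D = U \<union> J"
    using boundary closure_subset[of D] unfolding U_def J_def by blast
  have Uo: "open U" using f_open U_def by simp
  have clU: "closure U \<subseteq> U \<union> J"
    using closure_minimal[of U "U \<union> J"] KU K compact_imp_closed by (metis Un_upper1)
  have bU: "bounded U" using KU K compact_imp_bounded bounded_subset by (metis Un_upper1)
  have frU: "frontier U \<subseteq> J" using clU Uo unfolding frontier_def interior_open[OF Uo] by blast
  have UO: "U \<inter> Ou = {}"
  proof (rule ccontr)
    assume a: "U \<inter> Ou \<noteq> {}"
    have "Ou \<inter> frontier U = {}" using frU JC(7,6) by blast
    hence "Ou - U = {}" using connected_Int_frontier[OF JC(3), of U] a by blast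
    hence "Ou \<subseteq> U" by blast
    thus False using bU JC(5) bounded_subset by blast
  qed
  have UJ: "U \<inter> J = {}"
  proof -
    have "U \<inter> closure Ou = {}" using open_Int_closure_eq_empty[OF Uo] UO by blast
    moreover have "J \<subseteq> closure Ou" using JC(8) unfolding frontier_def by blast
    ultimately show ?thesis by blast
  qed
  have UI: "U \<subseteq> I" using UO UJ JC(7) by blast
  have "D \<noteq> {}"
  proof
    assume "D = {}"
    hence "J = {}" using boundary J_def by simp
    thus False using J_def path_image_nonempty by blast
  qed
  hence Une: "U \<noteq> {}" using U_def by simp
  have "I \<subseteq> U"
  proof (rule ccontr)
    assume "\<not> I \<subseteq> U"
    hence "I - U \<noteq> {}" by blast
    moreover have "I \<inter> U \<noteq> {}" using UI Une by blast
    ultimately have "I \<inter> frontier U \<noteq> {}" using connected_Int_frontier[OF JC(2)] by blast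
    thus False using frU JC(6,7) by blast
  qed
  thus ?thesis using UI U_def I_def J_def by blast
qed

end
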